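(* Every equilibrium $(S,I_1,I_2,I_{12},R)$ of the system below with all components nonnegative is of exactly one of the following types: (a) $(0,0,0,0,0)$; (b) $(0,0,0,0,R^{**})$ with $R^{**}=\frac{K}{b}(b-\mu_4')$; (c) $G_2=(S^{**},0,0,0,0)$; (d) $(S,I_1,0,0,R)$ with $S,I_1,R>0$; (e) $(S,0,I_2,0,R)$ with $S,I_2,R>0$; (f) $(S,I_1,I_2,I_{12},R)$ with all five components positive. In particular there is no nonnegative equilibrium with $S=0$ and $I_1+I_2+I_{12}>0$, no nonnegative equilibrium with $I_{12}>0$ and $I_1I_2=0$, and no nonnegative equilibrium with $I_1I_2>0$ and $I_{12}=0$.
   Context: Consider, for $t\ge0$, the system $S'=\big(b(1-\tfrac{N}{K})-\alpha_1I_1-\alpha_2I_2-(\beta_1+\beta_2+\alpha_3)I_{12}-\mu_0\big)S$, $I_1'=\big(b(1-\tfrac{N}{K})+\alpha_1S-\eta_1I_{12}-\gamma_1I_2-\mu_1\big)I_1+\beta_1SI_{12}$, $I_2'=\big(b(1-\tfrac{N}{K})+\alpha_2S-\eta_2I_{12}-\gamma_2I_1-\mu_2\big)I_2+\beta_2SI_{12}$, $I_{12}'=\big(b(1-\tfrac{N}{K})+\alpha_3S+\eta_1I_1+\eta_2I_2-\mu_3\big)I_{12}+(\gamma_1+\gamma_2)I_1I_2$, $R'=\big(b(1-\tfrac{N}{K})-\mu_4'\big)R+\rho_1I_1+\rho_2I_2+\rho_3I_{12}$, where $N=S+I_1+I_2+I_{12}+R$. All parameters $b,K,\alpha_i,\beta_i,\gamma_i,\eta_i,\rho_i,\mu_0,\mu_i'$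 are positive and $\mu_i=\rho_i+\mu_i'$ for $i=1,2,3$. Standing assumptions: $b>\mu_0$, $b>\mu_i$ ($i=1,2,3$), $b>\mu_4'$, and $\mu_0<\mu_4'<\mu_j'$ for $j=1,2,3$. Set $\sigma_k=(\mu_k-\mu_0)/\alpha_k$ ($k=1,2,3$), assumed to satisfy $\sigma_1<\sigma_2<\sigma_3$, and $S^{**}=\frac{K}{b}(b-\mu_0)$. An equilibrium is a point at which all five right-hand sides vanish. *)

theory Defs
  imports Complex_Main
begin

definition equilibrium ::
  "real \<Rightarrow> real \<Rightarrow> real \<Rightarrow> real \<Rightarrow> real \<Rightarrow> real \<Rightarrow> real \<Rightarrow> real \<Rightarrow> real \<Rightarrow> real \<Rightarrow>
   real \<Rightarrow> real \<Rightarrow> real \<Rightarrow> real \<Rightarrow> real \<Rightarrow> real \<Rightarrow> real \<Rightarrow> real \<Rightarrow> real \<Rightarrow>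
   real \<Rightarrow> real \<Rightarrow> real \<Rightarrow> real \<Rightarrow> real \<Rightarrow> bool" where
  "equilibrium b K a1 a2 a3 be1 be2 g1 g2 e1 e2 r1 r2 r3 m0 m1' m2' m3' m4' S I1 I2 I12 R \<longleftrightarrow>
    (let N = S + I1 + I2 + I12 + R; L = b * (1 - N / K);
         m1 = r1 + m1'; m2 = r2 + m2'; m3 = r3 + m3' in
     (L - a1 * I1 - a2 * I2 - (be1 + be2 + a3) * I12 - m0) * S = 0 \<and>
     (L + a1 * S - e1 * I12 - g1 * I2 - m1) * I1 + be1 * S * I12 = 0 \<and>
     (L + a2 * S - e2 * I12 - g2 * I1 - m2) * I2 + be2 * S * I12 = 0 \<and>
     (L + a3 * S + e1 * I1 + e2 * I2 - m3) * I12 + (g1 + g2) * I1 * I2 = 0 \<and>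
     (L - m4') * R + r1 * I1 + r2 * I2 + r3 * I12 = 0)"

end

theory Submission
  imports Defs
begin

theorem mainTheorem4:
  fixes b K a1 a2 a3 be1 be2 g1 g2 e1 e2 r1 r2 r3 m0 m1' m2' m3' m4' :: real
    and S I1 I2 I12 R :: real
  assumes pos: "b > 0" "K > 0" "a1 > 0" "a2 > 0" "a3 > 0" "be1 > 0" "be2 > 0"
      "g1 > 0" "g2 > 0" "e1 > 0" "e2 > 0" "r1 > 0" "r2 > 0" "r3 > 0"
      "m0 > 0" "m1' > 0" "m2' > 0" "m3' > 0" "m4' > 0"
    and hb: "b > m0" "b > r1 + m1'" "b > r2 + m2'" "b > r3 + m3'" "b > m4'"
    and hmu: "m0 < m4'" "m4' < m1'" "m4' < m2'" "m4' < m3'"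
    and hsig: "(r1 + m1' - m0) / a1 < (r2 + m2' - m0) / a2"
      "(r2 + m2' - m0) / a2 < (r3 + m3' - m0) / a3"
    and eq: "equilibrium b K a1 a2 a3 be1 be2 g1 g2 e1 e2 r1 r2 r3 m0 m1' m2' m3' m4' S I1 I2 I12 R"
    and nonneg: "S \<ge> 0" "I1 \<ge> 0" "I2 \<ge> 0" "I12 \<ge> 0" "R \<ge> 0"
  shows "(S = 0 \<and> I1 = 0 \<and> I2 = 0 \<and> I12 = 0 \<and> R = 0)
       \<or> (S = 0 \<and> I1 = 0 \<and> I2 = 0 \<and> I12 = 0 \<and> R = K / b * (b - m4'))
       \<or> (S = K / b * (b - m0) \<and> I1 = 0 \<and> I2 = 0 \<and> I12 = 0 \<and> R = 0)
       \<or> (S > 0 \<and> I1 > 0 \<and> I2 = 0 \<and> I12 = 0 \<and> R > 0)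
       \<or> (S > 0 \<and> I1 = 0 \<and> I2 > 0 \<and> I12 = 0 \<and> R > 0)
       \<or> (S > 0 \<and> I1 > 0 \<and> I2 > 0 \<and> I12 > 0 \<and> R > 0)"
proof -
  define L where "L = b * (1 - (S + I1 + I2 + I12 + R) / K)"
  have E1: "(L - a1 * I1 - a2 * I2 - (be1 + be2 + a3) * I12 - m0) * S = 0"
   and E2: "(L + a1 * S - e1 * I12 - g1 * I2 - (r1 + m1')) * I1 + be1 * S * I12 = 0"
   and E3: "(L + a2 * S - e2 * I12 - g2 * I1 - (r2 + m2')) * I2 + be2 * S * I12 = 0"
   and E4: "(L + a3 * S + e1 * I1 + e2 * I2 - (r3 + m3')) * I12 + (g1 + g2) * I1 * I2 = 0"
   and E5: "(L - m4') * R + r1 * I1 + r2 * I2 + r3 * I12 = 0"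
    using eq unfolding equilibrium_def Let_def L_def by auto
  have R_pos: "R > 0" if "I1 + I2 + I12 > 0" "L \<ge> m0 \<or> L > m4'"
  proof (rule ccontr)
    assume "\<not> R > 0" hence "R = 0" using nonneg by auto
    hence "r1 * I1 + r2 * I2 + r3 * I12 = 0" using E5 by simp
    moreover have "r1 * I1 + r2 * I2 + r3 * I12 > 0"
    proof -
      have "r1 * I1 \<ge> 0" "r2 * I2 \<ge> 0" "r3 * I12 \<ge> 0" using pos nonneg by auto
      moreover have "r1 * I1 > 0 \<or> r2 * I2 > 0 \<or> r3 * I12 > 0"
        using that(1) nonneg pos by (smt (verit) mult_pos_pos)
      ultimately show ?thesis by linarith
    qed
    ultimately show False by simp
  qed
  show ?thesis
  proof (cases "S = 0")
    case S0: True
    have I1z: "I1 = 0"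
    proof (rule ccontr)
      assume "I1 \<noteq> 0"
      hence "L - e1 * I12 - g1 * I2 - (r1 + m1') = 0" using E2 S0 by simp
      hence "L \<ge> r1 + m1'" using pos nonneg by (smt (verit) mult_nonneg_nonneg)
      hence "(L - m4') * R \<ge> 0" using hmu pos nonneg by simp
      moreover have "r1 * I1 > 0" using \<open>I1 \<noteq> 0\<close> nonneg pos by simp
      moreover have "r2 * I2 \<ge> 0" "r3 * I12 \<ge> 0" using pos nonneg by auto
      ultimately show False using E5 by linarith
    qed
    have I2z: "I2 = 0"
    proof (rule ccontr)
      assume "I2 \<noteq> 0"
      hence "L - e2 * I12 - g2 * I1 - (r2 + m2') = 0" using E3 S0 by simp
      hence "L \<ge> r2 + m2'" using pos nonneg by (smt (verit) mult_nonneg_nonneg)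
      hence "(L - m4') * R \<ge> 0" using hmu pos nonneg by simp
      moreover have "r2 * I2 > 0" using \<open>I2 \<noteq> 0\<close> nonneg pos by simp
      moreover have "r1 * I1 \<ge> 0" "r3 * I12 \<ge> 0" using pos nonneg by auto
      ultimately show False using E5 by linarith
    qed
    have I12z: "I12 = 0"
    proof (rule ccontr)
      assume "I12 \<noteq> 0"
      hence "L - (r3 + m3') = 0" using E4 S0 I1z I2z by simp
      hence "(L - m4') * R \<ge> 0" using hmu pos nonneg by simp
      moreover have "r3 * I12 > 0" using \<open>I12 \<noteq> 0\<close> nonneg pos by simp
      ultimately show False using E5 I1z I2z by simp
    qed
    have "(L - m4') * R = 0" using E5 I1z I2z I12z by simp
    hence "R = 0 \<or> L = m4'" by auto
    moreover have "R = K / b * (b - m4')" if "L = m4'"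
    proof -
      have "b * (1 - R / K) = m4'" using that L_def S0 I1z I2z I12z by simp
      thus ?thesis using pos by (simp add: field_simps)
    qed
    ultimately show ?thesis using S0 I1z I2z I12z by blast
  next
    case False
    hence Sp: "S > 0" using nonneg by simp
    have LL: "L = a1 * I1 + a2 * I2 + (be1 + be2 + a3) * I12 + m0" using E1 False by simp
    have Lm0: "L \<ge> m0" using LL pos nonneg
      by (smt (verit) mult_nonneg_nonneg)
    show ?thesis
    proof (cases "I12 = 0")
      case False
      hence I12p: "I12 > 0" using nonneg by simp
      have "I1 \<noteq> 0"
      proof
        assume "I1 = 0" hence "be1 * S * I12 = 0" using E2 by simp
        thus False using pos Sp I12p by simp
      qed
      moreover have "I2 \<noteq> 0"
      proof
        assume "I2 = 0" hence "be2 * S * I12 = 0" using E3 by simp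
        thus False using pos Sp I12p by simp
      qed
      moreover have "R > 0" using R_pos Lm0 I12p nonneg by simp
      ultimately show ?thesis using Sp I12p nonneg by simp
    next
      case I12z: True
      have "(g1 + g2) * I1 * I2 = 0" using E4 I12z by simp
      hence "I1 = 0 \<or> I2 = 0" using pos by simp
      thus ?thesis
      proof
        assume I1z: "I1 = 0"
        show ?thesis
        proof (cases "I2 = 0")
          case True
          have "L = m0" using LL I1z True I12z by simp
          have "(m0 - m4') * R = 0" using E5 I1z True I12z \<open>L = m0\<close> by simp
          hence R0: "R = 0" using hmu by simp
          have "b * (1 - S / K) = m0" using \<open>L = m0\<close> L_def I1z True I12z R0 by simp
          hence "S = K / b * (b - m0)" using pos by (simp add: field_simps)
          thus ?thesis using I1z True I12z R0 by simp
        next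
          case False
          have "R > 0" using R_pos Lm0 False nonneg I1z I12z by simp
          thus ?thesis using Sp I1z False I12z nonneg by simp
        qed
      next
        assume I2z: "I2 = 0"
        show ?thesis
        proof (cases "I1 = 0")
          case True
          have "L = m0" using LL I2z True I12z by simp
          have "(m0 - m4') * R = 0" using E5 I2z True I12z \<open>L = m0\<close> by simp
          hence R0: "R = 0" using hmu by simp
          have "b * (1 - S / K) = m0" using \<open>L = m0\<close> L_def I2z True I12z R0 by simp
          hence "S = K / b * (b - m0)" using pos by (simp add: field_simps)
          thus ?thesis using I2z True I12z R0 by simp
        next
          case False
          have "R > 0" using R_pos Lm0 False nonneg I2z I12z by simp
          thus ?thesis using Sp I2z False I12z nonneg by simp
        qed
      qed
    qed
  qed
qed

end
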